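(* Let $G$ be a connected graph with infinitely many nodes. Then the enlargement ${}^{*}G$ has either exactly one galaxy (its principal galaxy) or infinitely many galaxies.
   Context: Conventions. $G=\{X,B\}$ is a graph whose branches are two-element subsets of $X$, and $d$ is the graph distance. Fix a free ultrafilter $\mathcal F$ on $\mathbb N$. Hypernodes and enlargement. Hypernodes are classes $[x_n]$ of node sequences, with two sequences identified when they agree on a set in $\mathcal F$. A standard hypernode is the class of a constant sequence. ${}^{*}G$ consists of the hypernodes and the hyperbranches $[\{x_n,y_n\}]$ with $\{n:\{x_n,y_n\}\in B\}\in\mathcal F$. Galaxies. Hypernodes $[x_n]$ and $[y_n]$ are limitedly distant if $\{n:d(x_n,y_n)\le k\}\in\mathcal F$ for some $k\in\mathbb N$. Galaxies are the classes of this equivalence relation, together with the hyperbranches between their hypernodes. The principal galaxy contains the standard hypernodes. *)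

theory Defs
  imports Main
begin

definition free_ultrafilter :: "nat set set \<Rightarrow> bool" where
  "free_ultrafilter U \<longleftrightarrow>
     UNIV \<in> U \<and> {} \<notin> U \<and>
     (\<forall>A B. A \<in> U \<and> B \<in> U \<longrightarrow> A \<inter> B \<in> U) \<and>
     (\<forall>A B. A \<in> U \<and> A \<subseteq> B \<longrightarrow> B \<in> U) \<and>
     (\<forall>A. A \<in> U \<or> - A \<in> U) \<and>
     (\<forall>A. finite A \<longrightarrow> A \<notin> U)"

definition graph :: "'a set \<Rightarrow> 'a set set \<Rightarrow> bool" where
  "graph X B \<longleftrightarrow> (\<forall>e\<in>B. \<exists>x y. x \<in> X \<and> y \<in> X \<and> x \<noteq> y \<and> e = {x, y})"

text \<open>A walk from x to y: a nonempty list of nodes, consecutive ones joined by a branch.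
  Its length is the number of branches traversed, i.e. length of the list minus one.\<close>
definition walk :: "'a set \<Rightarrow> 'a set set \<Rightarrow> 'a list \<Rightarrow> 'a \<Rightarrow> 'a \<Rightarrow> bool" where
  "walk X B ps x y \<longleftrightarrow> ps \<noteq> [] \<and> hd ps = x \<and> last ps = y \<and> set ps \<subseteq> X \<and>
     (\<forall>i. Suc i < length ps \<longrightarrow> {ps ! i, ps ! Suc i} \<in> B)"

definition connected_graph :: "'a set \<Rightarrow> 'a set set \<Rightarrow> bool" where
  "connected_graph X B \<longleftrightarrow> (\<forall>x\<in>X. \<forall>y\<in>X. \<exists>ps. walk X B ps x y)"

definition gdist :: "'a set \<Rightarrow> 'a set set \<Rightarrow> 'a \<Rightarrow> 'a \<Rightarrow> nat" where
  "gdist X B x y = (LEAST n. \<exists>ps. walk X B ps x y \<and> length ps = Suc n)"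

definition node_seqs :: "'a set \<Rightarrow> (nat \<Rightarrow> 'a) set" where
  "node_seqs X = {s. \<forall>n. s n \<in> X}"

definition hyper_eq :: "nat set set \<Rightarrow> 'a set \<Rightarrow> ((nat \<Rightarrow> 'a) \<times> (nat \<Rightarrow> 'a)) set" where
  "hyper_eq U X = {(s, t). s \<in> node_seqs X \<and> t \<in> node_seqs X \<and> {n. s n = t n} \<in> U}"

definition hypernodes :: "nat set set \<Rightarrow> 'a set \<Rightarrow> (nat \<Rightarrow> 'a) set set" where
  "hypernodes U X = node_seqs X // hyper_eq U X"

definition hypernode_of :: "nat set set \<Rightarrow> 'a set \<Rightarrow> (nat \<Rightarrow> 'a) \<Rightarrow> (nat \<Rightarrow> 'a) set" where
  "hypernode_of U X s = hyper_eq U X `` {s}"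

definition lim_distant :: "nat set set \<Rightarrow> 'a set \<Rightarrow> 'a set set \<Rightarrow>
    ((nat \<Rightarrow> 'a) set \<times> (nat \<Rightarrow> 'a) set) set" where
  "lim_distant U X B = {(P, Q). P \<in> hypernodes U X \<and> Q \<in> hypernodes U X \<and>
     (\<exists>s\<in>P. \<exists>t\<in>Q. \<exists>k::nat. {n. gdist X B (s n) (t n) \<le> k} \<in> U)}"

text \<open>Galaxies: equivalence classes of hypernodes under limited distance
  (the hyperbranches between their hypernodes do not affect the count).\<close>
definition galaxies :: "nat set set \<Rightarrow> 'a set \<Rightarrow> 'a set set \<Rightarrow> (nat \<Rightarrow> 'a) set set set" where
  "galaxies U X B = hypernodes U X // lim_distant U X B"

definition principal_galaxy :: "nat set set \<Rightarrow> 'a set \<Rightarrow> 'a set set \<Rightarrow> (nat \<Rightarrow> 'a) set set" where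
  "principal_galaxy U X B =
     {Q. \<exists>x\<in>X. (hypernode_of U X (\<lambda>_. x), Q) \<in> lim_distant U X B}"

end

theory Submission
  imports Defs
begin

lemma walk_single: "walk X B [a] x y \<longleftrightarrow> a = x \<and> a = y \<and> a \<in> X"
  unfolding walk_def by auto

lemma walk_Cons2: "walk X B (a # b # ps) x y \<longleftrightarrow> a = x \<and> a \<in> X \<and> {a,b} \<in> B \<and> walk X B (b # ps) b y"
proof
  assume h: "walk X B (a # b # ps) x y"
  then have "{(a#b#ps) ! 0, (a#b#ps) ! Suc 0} \<in> B" unfolding walk_def by fastforce
  moreover have "\<forall>i. Suc i < length (b#ps) \<longrightarrow> {(b#ps) ! i, (b#ps) ! Suc i} \<in> B"
  proof (intro allI impI)
    fix i assume "Suc i < length (b#ps)"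
    then have "Suc (Suc i) < length (a#b#ps)" by simp
    then have "{(a#b#ps) ! Suc i, (a#b#ps) ! Suc (Suc i)} \<in> B" using h unfolding walk_def by blast
    then show "{(b#ps) ! i, (b#ps) ! Suc i} \<in> B" by simp
  qed
  ultimately show "a = x \<and> a \<in> X \<and> {a,b} \<in> B \<and> walk X B (b # ps) b y"
    using h unfolding walk_def by auto
next
  assume h: "a = x \<and> a \<in> X \<and> {a,b} \<in> B \<and> walk X B (b # ps) b y"
  have "\<forall>i. Suc i < length (a#b#ps) \<longrightarrow> {(a#b#ps) ! i, (a#b#ps) ! Suc i} \<in> B"
  proof (intro allI impI)
    fix i assume i: "Suc i < length (a#b#ps)"
    show "{(a#b#ps) ! i, (a#b#ps) ! Suc i} \<in> B"
    proof (cases i)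
      case 0 then show ?thesis using h by auto
    next
      case (Suc j)
      then have "Suc j < length (b#ps)" using i by simp
      then have "{(b#ps) ! j, (b#ps) ! Suc j} \<in> B" using h unfolding walk_def by blast
      then show ?thesis using Suc by simp
    qed
  qed
  then show "walk X B (a # b # ps) x y" using h unfolding walk_def by auto
qed

lemma walk_hd: "walk X B ps x y \<Longrightarrow> \<exists>qs. ps = x # qs"
  unfolding walk_def by (cases ps) auto

lemma walk_append: "walk X B ps x y \<Longrightarrow> walk X B qs y z \<Longrightarrow> walk X B (ps @ tl qs) x z"
proof (induction ps arbitrary: x)
  case Nil then show ?case by (simp add: walk_def)
next
  case (Cons a ps)
  show ?case
  proof (cases ps)
    case Nil
    then have "a = x" "a = y" using Cons.prems(1) walk_single[of X B a x y] by auto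
    moreover obtain r where "qs = y # r" using walk_hd[OF Cons.prems(2)] by blast
    ultimately show ?thesis using Cons.prems(2) Nil by simp
  next
    case (Cons b r)
    then have h: "a = x \<and> a \<in> X \<and> {a,b} \<in> B \<and> walk X B ps b y" using Cons.prems(1) walk_Cons2 by metis
    then have "walk X B (ps @ tl qs) b z" using Cons.IH Cons.prems(2) by blast
    then show ?thesis using h Cons walk_Cons2[of X B a b "r @ tl qs" x z] by auto
  qed
qed

lemma walk_rev: "walk X B ps x y \<Longrightarrow> walk X B (rev ps) y x"
proof (induction ps arbitrary: x)
  case Nil then show ?case by (simp add: walk_def)
next
  case (Cons a ps)
  show ?case
  proof (cases ps)
    case Nil then show ?thesis using Cons.prems walk_single[of X B a x y] walk_single[of X B a y x] by auto
  next
    case (Cons b r)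
    then have h: "a = x \<and> a \<in> X \<and> {a,b} \<in> B \<and> walk X B ps b y" using Cons.prems(1) walk_Cons2 by metis
    then have w1: "walk X B (rev ps) y b" using Cons.IH by blast
    have "b \<in> X" using h Cons unfolding walk_def by auto
    then have "walk X B [b, a] b a" using h walk_Cons2[of X B b a "[]" b a] walk_single[of X B a a a]
      by (auto simp add: insert_commute)
    from walk_append[OF w1 this] show ?thesis using h by simp
  qed
qed


lemma walk_len: "walk X B ps x y \<Longrightarrow> length ps = Suc (length ps - 1)"
  unfolding walk_def by (cases ps) auto

lemma gdist_le: "walk X B ps x y \<Longrightarrow> gdist X B x y \<le> length ps - 1"
proof -
  assume w: "walk X B ps x y"
  have "\<exists>qs. walk X B qs x y \<and> length qs = Suc (length ps - 1)" using w walk_len[OF w] by blast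
  then show ?thesis unfolding gdist_def by (rule Least_le)
qed

lemma gdist_walk:
  assumes "connected_graph X B" "x \<in> X" "y \<in> X"
  shows "\<exists>ps. walk X B ps x y \<and> length ps = Suc (gdist X B x y)"
proof -
  obtain ps where "walk X B ps x y" using assms unfolding connected_graph_def by blast
  then have "\<exists>n ps. walk X B ps x y \<and> length ps = Suc n" using walk_len by metis
  then show ?thesis unfolding gdist_def by (rule LeastI_ex)
qed

lemma gdist_refl: "x \<in> X \<Longrightarrow> gdist X B x x = 0"
  using gdist_le[of X B "[x]" x x] walk_single[of X B x x x] by simp

lemma gdist_edge: "a \<in> X \<Longrightarrow> c \<in> X \<Longrightarrow> {a,c} \<in> B \<Longrightarrow> gdist X B a c \<le> 1"
  using gdist_le[of X B "[a,c]" a c] walk_Cons2[of X B a c "[]" a c] walk_single[of X B c c c] by simp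

lemma gdist_tri:
  assumes "connected_graph X B" "x \<in> X" "y \<in> X" "z \<in> X"
  shows "gdist X B x z \<le> gdist X B x y + gdist X B y z"
proof -
  obtain ps where p: "walk X B ps x y" "length ps = Suc (gdist X B x y)" using gdist_walk[OF assms(1,2,3)] by blast
  obtain qs where q: "walk X B qs y z" "length qs = Suc (gdist X B y z)" using gdist_walk[OF assms(1,3,4)] by blast
  have "gdist X B x z \<le> length (ps @ tl qs) - 1" using gdist_le[OF walk_append[OF p(1) q(1)]] .
  then show ?thesis using p q by simp
qed

lemma gdist_sym:
  assumes "connected_graph X B" "x \<in> X" "y \<in> X"
  shows "gdist X B x y = gdist X B y x"
proof -
  have *: "gdist X B a b \<le> gdist X B b a" if ab: "a \<in> X" "b \<in> X" for a b
  proof -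
    obtain ps where p: "walk X B ps b a" "length ps = Suc (gdist X B b a)" using gdist_walk[OF assms(1) ab(2,1)] by blast
    show ?thesis using gdist_le[OF walk_rev[OF p(1)]] p(2) by simp
  qed
  show ?thesis using *[of x y] *[of y x] assms by simp
qed

lemma gdist_ivt:
  assumes "connected_graph X B" "x \<in> X"
  shows "walk X B ps a b \<Longrightarrow> gdist X B x a \<le> k \<Longrightarrow> k \<le> gdist X B x b \<Longrightarrow> \<exists>y\<in>X. gdist X B x y = k"
proof (induction ps arbitrary: a)
  case Nil then show ?case by (simp add: walk_def)
next
  case (Cons p ps)
  show ?case
  proof (cases ps)
    case Nil then show ?thesis using Cons.prems walk_single[of X B p a b] by auto
  next
    case (Cons c r)
    then have h: "p = a \<and> p \<in> X \<and> {p,c} \<in> B \<and> walk X B ps c b" using Cons.prems(1) walk_Cons2 by metis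
    have cX: "c \<in> X" using h Cons unfolding walk_def by auto
    have aX: "a \<in> X" using h by blast
    have acB: "{a,c} \<in> B" using h by blast
    show ?thesis
    proof (cases "k = gdist X B x a")
      case True then show ?thesis using aX by blast
    next
      case False
      have "gdist X B x c \<le> gdist X B x a + gdist X B a c" using gdist_tri[OF assms(1,2) aX cX] .
      moreover have "gdist X B a c \<le> 1" using gdist_edge[OF aX cX acB] .
      ultimately have "gdist X B x c \<le> k" using False Cons.prems(2) by linarith
      moreover have "walk X B ps c b" using h by blast
      ultimately show ?thesis using Cons.IH[of c] Cons.prems(3) by blast
    qed
  qed
qed

lemma gdist_exists:
  assumes "connected_graph X B" "x \<in> X" "z \<in> X" "k \<le> gdist X B x z"
  shows "\<exists>y\<in>X. gdist X B x y = k"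
proof -
  obtain ps where "walk X B ps x z" using assms(1,2,3) unfolding connected_graph_def by blast
  moreover have "gdist X B x x \<le> k" using gdist_refl[OF assms(2)] by simp
  ultimately show ?thesis using gdist_ivt[OF assms(1,2), of ps x z k] assms(4) by simp
qed


definition close :: "nat set set \<Rightarrow> 'a set \<Rightarrow> 'a set set \<Rightarrow> (nat \<Rightarrow> 'a) \<Rightarrow> (nat \<Rightarrow> 'a) \<Rightarrow> bool" where
  "close U X B s t \<longleftrightarrow> (\<exists>k. {n. gdist X B (s n) (t n) \<le> k} \<in> U)"

definition Gal :: "nat set set \<Rightarrow> 'a set \<Rightarrow> 'a set set \<Rightarrow> (nat \<Rightarrow> 'a) \<Rightarrow> (nat \<Rightarrow> 'a) set set" where
  "Gal U X B s = {hyper_eq U X `` {t} | t. t \<in> node_seqs X \<and> close U X B s t}"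

lemma fu_facts:
  assumes "free_ultrafilter U"
  shows "UNIV \<in> U" "{} \<notin> U" "A \<in> U \<Longrightarrow> C \<in> U \<Longrightarrow> A \<inter> C \<in> U"
    "A \<in> U \<Longrightarrow> A \<subseteq> C \<Longrightarrow> C \<in> U" "A \<notin> U \<Longrightarrow> - A \<in> U"
proof -
  have h: "UNIV \<in> U \<and> {} \<notin> U \<and>
     (\<forall>A B. A \<in> U \<and> B \<in> U \<longrightarrow> A \<inter> B \<in> U) \<and>
     (\<forall>A B. A \<in> U \<and> A \<subseteq> B \<longrightarrow> B \<in> U) \<and>
     (\<forall>A. A \<in> U \<or> - A \<in> U)" using assms unfolding free_ultrafilter_def by simp
  show "UNIV \<in> U" using h by simp
  show "{} \<notin> U" using h by simp
  show "A \<in> U \<Longrightarrow> C \<in> U \<Longrightarrow> A \<inter> C \<in> U" using h by simp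
  show "A \<in> U \<Longrightarrow> A \<subseteq> C \<Longrightarrow> C \<in> U" using h by simp
  show "A \<notin> U \<Longrightarrow> - A \<in> U" using h by blast
qed

lemma class_mem: "t \<in> hyper_eq U X `` {s} \<longleftrightarrow> s \<in> node_seqs X \<and> t \<in> node_seqs X \<and> {n. s n = t n} \<in> U"
  unfolding hyper_eq_def by blast

lemma class_self: "free_ultrafilter U \<Longrightarrow> s \<in> node_seqs X \<Longrightarrow> s \<in> hyper_eq U X `` {s}"
  unfolding class_mem using fu_facts(1) by simp

lemma close_cong:
  assumes U: "free_ultrafilter U" and c: "close U X B s t"
    and S: "{n. s n = s' n} \<in> U" and T: "{n. t n = t' n} \<in> U"
  shows "close U X B s' t'"
proof -
  obtain k where k: "{n. gdist X B (s n) (t n) \<le> k} \<in> U" using c unfolding close_def by blast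
  have "{n. gdist X B (s n) (t n) \<le> k} \<inter> {n. s n = s' n} \<inter> {n. t n = t' n} \<in> U"
    using fu_facts(3)[OF U] k S T by blast
  moreover have "{n. gdist X B (s n) (t n) \<le> k} \<inter> {n. s n = s' n} \<inter> {n. t n = t' n} \<subseteq> {n. gdist X B (s' n) (t' n) \<le> k}"
    by auto
  ultimately show ?thesis unfolding close_def using fu_facts(4)[OF U] by blast
qed

lemma ld_iff:
  assumes U: "free_ultrafilter U" and s: "s \<in> node_seqs X" and t: "t \<in> node_seqs X"
  shows "(hyper_eq U X `` {s}, hyper_eq U X `` {t}) \<in> lim_distant U X B \<longleftrightarrow> close U X B s t"
proof
  assume "(hyper_eq U X `` {s}, hyper_eq U X `` {t}) \<in> lim_distant U X B"
  then obtain s' t' k where s': "s' \<in> hyper_eq U X `` {s}" and t': "t' \<in> hyper_eq U X `` {t}"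
    and k: "{n. gdist X B (s' n) (t' n) \<le> k} \<in> U"
    unfolding lim_distant_def by blast
  have c: "close U X B s' t'" unfolding close_def using k by blast
  have "{n. s n = s' n} \<in> U" using s' class_mem by blast
  moreover have "{n. s' n = s n} = {n. s n = s' n}" by auto
  ultimately have S: "{n. s' n = s n} \<in> U" by simp
  have "{n. t n = t' n} \<in> U" using t' class_mem by blast
  moreover have "{n. t' n = t n} = {n. t n = t' n}" by auto
  ultimately have T: "{n. t' n = t n} \<in> U" by simp
  show "close U X B s t" using close_cong[OF U c S T] .
next
  assume c: "close U X B s t"
  have "hyper_eq U X `` {s} \<in> hypernodes U X" "hyper_eq U X `` {t} \<in> hypernodes U X"
    unfolding hypernodes_def using s t by (auto intro: quotientI)
  moreover have "s \<in> hyper_eq U X `` {s}" "t \<in> hyper_eq U X `` {t}" using class_self U s t by blast+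
  ultimately show "(hyper_eq U X `` {s}, hyper_eq U X `` {t}) \<in> lim_distant U X B"
    using c unfolding lim_distant_def close_def by blast
qed

lemma close_refl: "free_ultrafilter U \<Longrightarrow> s \<in> node_seqs X \<Longrightarrow> close U X B s s"
proof -
  assume U: "free_ultrafilter U" and s: "s \<in> node_seqs X"
  have "{n. gdist X B (s n) (s n) \<le> 0} = UNIV" using s gdist_refl unfolding node_seqs_def by fastforce
  then show ?thesis unfolding close_def using fu_facts(1)[OF U] by metis
qed

lemma close_sym:
  assumes G: "connected_graph X B" and s: "s \<in> node_seqs X" and t: "t \<in> node_seqs X"
    and c: "close U X B s t"
  shows "close U X B t s"
proof -
  obtain k where k: "{n. gdist X B (s n) (t n) \<le> k} \<in> U" using c unfolding close_def by blast
  have "{n. gdist X B (s n) (t n) \<le> k} = {n. gdist X B (t n) (s n) \<le> k}"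
    using gdist_sym[OF G] s t unfolding node_seqs_def by auto
  then show ?thesis unfolding close_def using k by metis
qed

lemma close_trans:
  assumes U: "free_ultrafilter U" and G: "connected_graph X B" and s: "s \<in> node_seqs X"
    and t: "t \<in> node_seqs X" and u: "u \<in> node_seqs X"
    and c1: "close U X B s t" and c2: "close U X B t u"
  shows "close U X B s u"
proof -
  obtain k where k: "{n. gdist X B (s n) (t n) \<le> k} \<in> U" using c1 unfolding close_def by blast
  obtain l where l: "{n. gdist X B (t n) (u n) \<le> l} \<in> U" using c2 unfolding close_def by blast
  have "{n. gdist X B (s n) (t n) \<le> k} \<inter> {n. gdist X B (t n) (u n) \<le> l} \<in> U"
    using fu_facts(3)[OF U k l] .
  moreover have "{n. gdist X B (s n) (t n) \<le> k} \<inter> {n. gdist X B (t n) (u n) \<le> l} \<subseteq> {n. gdist X B (s n) (u n) \<le> k + l}"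
  proof
    fix n assume "n \<in> {n. gdist X B (s n) (t n) \<le> k} \<inter> {n. gdist X B (t n) (u n) \<le> l}"
    moreover have "gdist X B (s n) (u n) \<le> gdist X B (s n) (t n) + gdist X B (t n) (u n)"
      using gdist_tri[OF G] s t u unfolding node_seqs_def by blast
    ultimately show "n \<in> {n. gdist X B (s n) (u n) \<le> k + l}" by simp
  qed
  ultimately show ?thesis unfolding close_def using fu_facts(4)[OF U] by blast
qed

lemma ld_image:
  assumes U: "free_ultrafilter U" and s: "s \<in> node_seqs X"
  shows "lim_distant U X B `` {hyper_eq U X `` {s}} = Gal U X B s"
proof
  show "lim_distant U X B `` {hyper_eq U X `` {s}} \<subseteq> Gal U X B s"
  proof
    fix Q assume "Q \<in> lim_distant U X B `` {hyper_eq U X `` {s}}"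
    then have Q: "(hyper_eq U X `` {s}, Q) \<in> lim_distant U X B" by blast
    then have "Q \<in> hypernodes U X" unfolding lim_distant_def by blast
    then obtain t where t: "t \<in> node_seqs X" "Q = hyper_eq U X `` {t}"
      unfolding hypernodes_def by (auto elim!: quotientE)
    then have "close U X B s t" using ld_iff[OF U s t(1)] Q by simp
    then show "Q \<in> Gal U X B s" unfolding Gal_def using t by blast
  qed
next
  show "Gal U X B s \<subseteq> lim_distant U X B `` {hyper_eq U X `` {s}}"
  proof
    fix Q assume "Q \<in> Gal U X B s"
    then obtain t where t: "t \<in> node_seqs X" "close U X B s t" "Q = hyper_eq U X `` {t}"
      unfolding Gal_def by blast
    then show "Q \<in> lim_distant U X B `` {hyper_eq U X `` {s}}" using ld_iff[OF U s t(1)] by simp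
  qed
qed

lemma galaxies_eq:
  assumes U: "free_ultrafilter U"
  shows "galaxies U X B = Gal U X B ` node_seqs X"
proof -
  have "galaxies U X B = (\<Union>P\<in>hypernodes U X. {lim_distant U X B `` {P}})"
    unfolding galaxies_def quotient_def by simp
  also have "\<dots> = (\<Union>s\<in>node_seqs X. {lim_distant U X B `` {hyper_eq U X `` {s}}})"
    unfolding hypernodes_def quotient_def by blast
  also have "\<dots> = (\<Union>s\<in>node_seqs X. {Gal U X B s})"
    by (rule SUP_cong) (simp_all add: ld_image[OF U])
  finally show ?thesis by blast
qed

lemma Gal_eq:
  assumes U: "free_ultrafilter U" and G: "connected_graph X B" and s: "s \<in> node_seqs X"
    and t: "t \<in> node_seqs X" and c: "close U X B s t"
  shows "Gal U X B s \<subseteq> Gal U X B t"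
proof
  fix Q assume "Q \<in> Gal U X B s"
  then obtain u where u: "u \<in> node_seqs X" "close U X B s u" "Q = hyper_eq U X `` {u}"
    unfolding Gal_def by blast
  have "close U X B t u" using close_trans[OF U G t s u(1) close_sym[OF G s t c] u(2)] .
  then show "Q \<in> Gal U X B t" unfolding Gal_def using u by blast
qed

lemma const_in: "x \<in> X \<Longrightarrow> (\<lambda>_. x) \<in> node_seqs X"
  unfolding node_seqs_def by simp

lemma close_const:
  assumes U: "free_ultrafilter U" shows "close U X B (\<lambda>_. x) (\<lambda>_. y)"
proof -
  have "{n. gdist X B ((\<lambda>_. x) n) ((\<lambda>_. y) n) \<le> gdist X B x y} = UNIV" by simp
  then show ?thesis unfolding close_def using fu_facts(1)[OF U] by metis
qed

lemma principal_eq: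
  assumes U: "free_ultrafilter U" and G: "connected_graph X B" and x0: "x0 \<in> X"
  shows "principal_galaxy U X B = Gal U X B (\<lambda>_. x0)"
proof -
  have "principal_galaxy U X B = (\<Union>x\<in>X. lim_distant U X B `` {hyper_eq U X `` {\<lambda>_. x}})"
    unfolding principal_galaxy_def hypernode_of_def by blast
  also have "\<dots> = (\<Union>x\<in>X. Gal U X B (\<lambda>_. x))" by (rule SUP_cong) (simp_all add: ld_image[OF U const_in])
  also have "\<dots> = Gal U X B (\<lambda>_. x0)"
  proof
    show "(\<Union>x\<in>X. Gal U X B (\<lambda>_. x)) \<subseteq> Gal U X B (\<lambda>_. x0)"
      using Gal_eq[OF U G const_in const_in close_const[OF U]] x0 by blast
    show "Gal U X B (\<lambda>_. x0) \<subseteq> (\<Union>x\<in>X. Gal U X B (\<lambda>_. x))" using x0 by blast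
  qed
  finally show ?thesis .
qed

lemma Gal_eq_close:
  assumes U: "free_ultrafilter U" and u: "u \<in> node_seqs X" and v: "v \<in> node_seqs X"
    and e: "Gal U X B u = Gal U X B v"
  shows "close U X B u v"
proof -
  have "hyper_eq U X `` {v} \<in> Gal U X B v" unfolding Gal_def using close_refl[OF U v] v by blast
  then have "hyper_eq U X `` {v} \<in> Gal U X B u" using e by simp
  then obtain w where w: "w \<in> node_seqs X" "close U X B u w" "hyper_eq U X `` {v} = hyper_eq U X `` {w}"
    unfolding Gal_def by blast
  have "v \<in> hyper_eq U X `` {w}" using w(3) class_self[OF U v] by simp
  then have W: "{n. w n = v n} \<in> U" using class_mem by blast
  show ?thesis using close_cong[OF U w(2) _ W, of u] fu_facts(1)[OF U] by simp
qed


lemma div_pow_gap: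
  fixes D :: nat
  assumes "m < m'"
  shows "2 * (D div 2^m') \<le> D div 2^m"
proof -
  have "D div 2^m' \<le> D div 2^(Suc m)"
  proof (rule div_le_mono2)
    show "0 < (2::nat)^(Suc m)" by simp
    show "(2::nat)^(Suc m) \<le> 2^m'" using power_increasing[of "Suc m" m' "2::nat"] assms by simp
  qed
  also have "D div 2^(Suc m) = D div 2^m div 2"
    using div_mult2_eq[of D "2^m" "2::nat"] by (simp add: mult.commute)
  finally show ?thesis by linarith
qed

theorem mainTheorem5:
  fixes U :: "nat set set" and X :: "'a set" and B :: "'a set set"
  assumes "free_ultrafilter U"
    and "graph X B"
    and "connected_graph X B"
    and "infinite X"
  shows "galaxies U X B = {principal_galaxy U X B} \<or> infinite (galaxies U X B)"
proof -
  note U = assms(1) and G = assms(3)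
  obtain x0 where x0: "x0 \<in> X" using assms(4) by (metis finite.emptyI ex_in_conv)
  define c0 where "c0 = (\<lambda>_::nat. x0)"
  have c0N: "c0 \<in> node_seqs X" unfolding c0_def using const_in[OF x0] .
  have P: "principal_galaxy U X B = Gal U X B c0" unfolding c0_def using principal_eq[OF U G x0] .
  have Gs: "galaxies U X B = Gal U X B ` node_seqs X" using galaxies_eq[OF U] .
  show ?thesis
  proof (cases "\<forall>s\<in>node_seqs X. close U X B c0 s")
    case True
    have "Gal U X B s = Gal U X B c0" if s: "s \<in> node_seqs X" for s
    proof
      show "Gal U X B s \<subseteq> Gal U X B c0"
        using Gal_eq[OF U G s c0N close_sym[OF G c0N s]] True s by blast
      show "Gal U X B c0 \<subseteq> Gal U X B s"
        using Gal_eq[OF U G c0N s] True s by blast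
    qed
    then have "galaxies U X B = {Gal U X B c0}" using Gs c0N by blast
    then show ?thesis using P by simp
  next
    case False
    then obtain s where s: "s \<in> node_seqs X" and nc: "\<not> close U X B c0 s" by blast
    define D where "D n = gdist X B x0 (s n)" for n
    have far: "{n. K < D n} \<in> U" for K
    proof -
      have "{n. D n \<le> K} \<notin> U" using nc unfolding close_def c0_def D_def by blast
      then have "- {n. D n \<le> K} \<in> U" using fu_facts(5)[OF U] by blast
      moreover have "- {n. D n \<le> K} = {n. K < D n}" by auto
      ultimately show ?thesis by simp
    qed
    define t where "t m n = (SOME y. y \<in> X \<and> gdist X B x0 y = D n div 2^m)" for m n
    have th: "t m n \<in> X \<and> gdist X B x0 (t m n) = D n div 2^m" for m n
    proof -
      have sn: "s n \<in> X" using s unfolding node_seqs_def by blast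
      have "D n div 2^m \<le> gdist X B x0 (s n)" unfolding D_def by (rule div_le_dividend)
      then have "\<exists>y. y \<in> X \<and> gdist X B x0 y = D n div 2^m" using gdist_exists[OF G x0 sn] by blast
      then show ?thesis unfolding t_def by (rule someI_ex)
    qed
    have tN: "t m \<in> node_seqs X" for m unfolding node_seqs_def using th by blast
    have nclose: "\<not> close U X B (t m) (t m')" if mm: "m < m'" for m m'
    proof
      assume "close U X B (t m) (t m')"
      then obtain k where k: "{n. gdist X B (t m n) (t m' n) \<le> k} \<in> U" unfolding close_def by blast
      have "{n. gdist X B (t m n) (t m' n) \<le> k} \<inter> {n. (k+1) * 2^m' < D n} \<in> U"
        using fu_facts(3)[OF U k far] .
      then have "{n. gdist X B (t m n) (t m' n) \<le> k} \<inter> {n. (k+1) * 2^m' < D n} \<noteq> {}"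
        using fu_facts(2)[OF U] by metis
      then obtain n where n1: "gdist X B (t m n) (t m' n) \<le> k" and n2: "(k+1) * 2^m' < D n" by blast
      have b: "k + 1 \<le> D n div 2^m'"
        using n2 less_eq_div_iff_mult_less_eq[of "2^m'" "k+1" "D n"] by simp
      have ab: "2 * (D n div 2^m') \<le> D n div 2^m" using div_pow_gap[OF mm] .
      have "gdist X B x0 (t m n) \<le> gdist X B x0 (t m' n) + gdist X B (t m' n) (t m n)"
        using gdist_tri[OF G x0] th by blast
      moreover have "gdist X B (t m' n) (t m n) = gdist X B (t m n) (t m' n)"
        using gdist_sym[OF G] th by blast
      ultimately have "D n div 2^m \<le> D n div 2^m' + k" using th n1 by simp
      then show False using b ab by linarith
    qed
    have inj: "inj (\<lambda>m. Gal U X B (t m))"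
    proof (rule injI)
      fix m m' assume e: "Gal U X B (t m) = Gal U X B (t m')"
      show "m = m'"
      proof (rule ccontr)
        assume "m \<noteq> m'"
        then consider "m < m'" | "m' < m" by linarith
        then show False
        proof cases
          case 1 then show False using nclose Gal_eq_close[OF U tN tN e] by blast
        next
          case 2 then show False using nclose Gal_eq_close[OF U tN tN e[symmetric]] by blast
        qed
      qed
    qed
    have "range (\<lambda>m. Gal U X B (t m)) \<subseteq> galaxies U X B" using Gs tN by blast
    moreover have "infinite (range (\<lambda>m. Gal U X B (t m)))"
      using inj finite_imageD infinite_UNIV_nat by blast
    ultimately show ?thesis using finite_subset by blast
  qed
qed

end
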